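(* Let $v\ge2$. An optimum $(d,2)$-CDA$((d+1)v^2;5,v)$ exists for every positive integer $d$ with $d+1\le v$, except possibly in the following cases: (1) $(d,v)\in\{(2,6),(4,6)\}$; (2) $v=6u$ and $d=v-2$, where $u\ne1$ and $\gcd(u,6)=1$.
   Context: Consecutive $t$-way interaction in an $N\times k$ array $A=(a_{ij})$ over a $v$-set $V$: $T=\{(i,x_i),\dots,(i+t-1,x_{i+t-1})\}$, $1\le i\le k-t+1$, $x_r\in V$; $\rho(A,T)=\{r: a_{r,j}=x_j\ \forall (j,x_j)\in T\}$, $\rho(A,\mathcal T)=\bigcup_{T\in\mathcal T}\rho(A,T)$. A $(d,t)$-CDA$(N;k,v)$ is an $N\times k$ array over $V$ in which every $t$ consecutive columns contain every $t$-tuple at least once, and such that for every set $\mathcal T$ of exactly $d$ distinct consecutive $t$-way interactions and every consecutive $t$-way interaction $T$: $\rho(A,T)\subseteq\rho(A,\mathcal T)$ iff $T\in\mathcal T$. It is optimum if $N=(d+1)v^t$. *)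

theory Defs
  imports Main
begin

text \<open>An N x k array over V is a function A :: nat => nat => 'a, where A r j is the
entry in row r < N and column j < k (0-based).\<close>

definition is_array :: "nat \<Rightarrow> nat \<Rightarrow> 'a set \<Rightarrow> (nat \<Rightarrow> nat \<Rightarrow> 'a) \<Rightarrow> bool" where
  "is_array N k V A \<longleftrightarrow> (\<forall>r<N. \<forall>j<k. A r j \<in> V)"

definition cons_interaction :: "nat \<Rightarrow> nat \<Rightarrow> 'a set \<Rightarrow> (nat \<times> 'a) set \<Rightarrow> bool" where
  "cons_interaction k t V T \<longleftrightarrow>
     (\<exists>i xs. i + t \<le> k \<and> length xs = t \<and> set xs \<subseteq> V \<and>
             T = {(i + j, xs ! j) | j. j < t})"

definition rho :: "nat \<Rightarrow> (nat \<Rightarrow> nat \<Rightarrow> 'a) \<Rightarrow> (nat \<times> 'a) set \<Rightarrow> nat set" where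
  "rho N A T = {r. r < N \<and> (\<forall>(j, x) \<in> T. A r j = x)}"

definition rho_set :: "nat \<Rightarrow> (nat \<Rightarrow> nat \<Rightarrow> 'a) \<Rightarrow> (nat \<times> 'a) set set \<Rightarrow> nat set" where
  "rho_set N A TT = (\<Union>T\<in>TT. rho N A T)"

definition is_CDA :: "nat \<Rightarrow> nat \<Rightarrow> nat \<Rightarrow> nat \<Rightarrow> 'a set \<Rightarrow> (nat \<Rightarrow> nat \<Rightarrow> 'a) \<Rightarrow> bool" where
  "is_CDA d t N k V A \<longleftrightarrow>
     is_array N k V A \<and>
     (\<forall>i xs. i + t \<le> k \<longrightarrow> length xs = t \<longrightarrow> set xs \<subseteq> V \<longrightarrow>
        (\<exists>r<N. \<forall>j<t. A r (i + j) = xs ! j)) \<and>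
     (\<forall>TT T. (\<forall>S\<in>TT. cons_interaction k t V S) \<and> finite TT \<and> card TT = d \<and>
             cons_interaction k t V T \<longrightarrow>
             (rho N A T \<subseteq> rho_set N A TT \<longleftrightarrow> T \<in> TT))"

end

theory Submission
  imports Defs
begin

lemma modeq_dvd: "(a::nat) mod v = b mod v \<Longrightarrow> int v dvd int a - int b"
proof -
  assume "a mod v = b mod v"
  then have "int a mod int v = int b mod int v" by (metis of_nat_mod)
  then show ?thesis by (simp add: mod_eq_dvd_iff)
qed

lemma small_eq: "(s::nat) < v \<Longrightarrow> s' < v \<Longrightarrow> int v dvd int s - int s' \<Longrightarrow> s = s'"
proof -
  assume a: "s < v" "s' < v" "int v dvd int s - int s'"
  then obtain k where k: "int s - int s' = int v * k" by (auto elim: dvdE)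
  show ?thesis
  proof (cases "k = 0")
    case True then show ?thesis using k by simp
  next
    case False
    then have "\<bar>int v * k\<bar> \<ge> int v" by (simp add: abs_mult) (smt (verit) mult_le_cancel_left1 of_nat_0_le_iff)
    then show ?thesis using k a by linarith
  qed
qed

definition row :: "nat \<Rightarrow> nat \<Rightarrow> nat \<Rightarrow> nat \<Rightarrow> nat" where
  "row v s x y = s * (v * v) + x * v + y"

definition Arr :: "nat \<Rightarrow> nat \<Rightarrow> nat \<Rightarrow> nat" where
  "Arr v r j = (let s = r div (v*v); x = r div v mod v; y = r mod v in
     if j = 0 then x else if j = 1 then y else if j = 2 then (x+y+s) mod v
     else if j = 3 then (y+s) mod v else (x+s) mod v)"

lemma row_dec:
  assumes "x < v" "y < v"
  shows "row v s x y div (v*v) = s" "row v s x y div v mod v = x" "row v s x y mod v = y"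
proof -
  have v: "v > 0" using assms by simp
  have "x * v + y < (x+1) * v" using assms by simp
  also have "(x+1) * v \<le> v * v" using assms by (intro mult_le_mono1) simp
  finally have "x * v + y < v * v" .
  moreover have "row v s x y = (x * v + y) + s * (v*v)" unfolding row_def by simp
  ultimately show "row v s x y div (v*v) = s" using v by (simp only:) (simp add: div_mult_self1)
  have e: "row v s x y = (s * v + x) * v + y" unfolding row_def by (simp add: algebra_simps)
  show "row v s x y mod v = y" unfolding e using assms by simp
  have "row v s x y div v = s * v + x" unfolding e using assms by simp
  then show "row v s x y div v mod v = x" using assms by simp
qed

lemma row_enc: "v > 0 \<Longrightarrow> r = row v (r div (v*v)) (r div v mod v) (r mod v)"
proof -
  have "r = (r div v) * v + r mod v" by simp
  moreover have "r div v = (r div v div v) * v + r div v mod v" by simp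
  moreover have "r div v div v = r div (v*v)" by (simp add: div_mult2_eq)
  ultimately show ?thesis unfolding row_def by (metis add_mult_distrib mult.assoc)
qed

lemma Arr_row: "x < v \<Longrightarrow> y < v \<Longrightarrow> Arr v (row v s x y) j =
  (if j = 0 then x else if j = 1 then y else if j = 2 then (x+y+s) mod v
     else if j = 3 then (y+s) mod v else (x+s) mod v)"
  unfolding Arr_def Let_def using row_dec[of x v y s] by simp

lemma wit: "x < v \<Longrightarrow> y < v \<Longrightarrow> Arr v (row v s x y) i = a \<Longrightarrow> Arr v (row v s x y) (i+1) = b
  \<Longrightarrow> \<exists>x<v. \<exists>y<v. Arr v (row v s x y) i = a \<and> Arr v (row v s x y) (i+1) = b" by blast

lemma cover:
  assumes "i \<le> 3" "a < v" "b < v" "s < v"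
  shows "\<exists>x<v. \<exists>y<v. Arr v (row v s x y) i = a \<and> Arr v (row v s x y) (i+1) = b"
proof -
  have v: "v > 0" using assms by simp
  consider "i = 0" | "i = 1" | "i = 2" | "i = 3" using assms(1) by linarith
  then show ?thesis
  proof cases
    case 1
    have "Arr v (row v s a b) 0 = a \<and> Arr v (row v s a b) 1 = b" using assms by (simp add: Arr_row)
    then show ?thesis using 1 assms by auto
  next
    case 2
    have "((b+2*v-a-s) mod v + a + s) mod v = (b+2*v-a-s + a + s) mod v" by (metis mod_add_left_eq mod_add_right_eq add.assoc)
    also have "\<dots> = (b + v*2) mod v" using assms by simp
    also have "\<dots> = b" using assms by simp
    finally have e: "((b+2*v-a-s) mod v + a + s) mod v = b" .
    show ?thesis using 2 assms v e by (intro wit[where x="(b+2*v-a-s) mod v" and y=a]) (simp_all add: Arr_row)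
  next
    case 3
    have "((a+v-b) mod v + (b+v-s) mod v + s) mod v = (a+v-b + (b+v-s) + s) mod v" by (metis mod_add_left_eq mod_add_right_eq add.assoc)
    also have "\<dots> = (a + v*2) mod v"
    proof -
      have z: "a+v-b + (b+v-s) + s = a + v*2" using assms by simp
      show ?thesis by (simp only: z)
    qed
    also have "\<dots> = a" using assms by simp
    finally have e: "((a+v-b) mod v + (b+v-s) mod v + s) mod v = a" .
    have e2: "((b+v-s) mod v + s) mod v = b"
    proof -
      have "((b+v-s) mod v + s) mod v = (b+v-s + s) mod v" by (metis mod_add_left_eq mod_add_right_eq add.assoc)
      also have "\<dots> = b" using assms by simp
      finally show ?thesis .
    qed
    show ?thesis using 3 assms v e e2 by (intro wit[where x="(a+v-b) mod v" and y="(b+v-s) mod v"]) (simp_all add: Arr_row)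
  next
    case 4
    have e: "((c+v-s) mod v + s) mod v = c" if "c < v" for c
    proof -
      have "((c+v-s) mod v + s) mod v = (c+v-s + s) mod v" by (metis mod_add_left_eq mod_add_right_eq add.assoc)
      also have "\<dots> = c" using assms that by simp
      finally show ?thesis .
    qed
    show ?thesis using 4 assms v e[of a] e[of b] by (intro wit[where x="(b+v-s) mod v" and y="(a+v-s) mod v"]) (simp_all add: Arr_row add.commute)
  qed
qed

definition F :: "nat \<Rightarrow> nat \<Rightarrow> nat \<Rightarrow> nat \<Rightarrow> nat \<Rightarrow> nat" where
  "F v s x y j = (if j = 0 then x else if j = 1 then y else if j = 2 then (x+y+s) mod v
     else if j = 3 then (y+s) mod v else (x+s) mod v)"

lemma Arr_F: "Arr v r j = F v (r div (v*v)) (r div v mod v) (r mod v) j"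
  unfolding Arr_def F_def Let_def by simp

lemma D012: fixes v :: nat assumes a: "s < v" "s' < v" "x = x'" "y = y'"
  and m: "(x+y+s) mod v = (x'+y'+s') mod v" shows "s = s'"
  using modeq_dvd[OF m] a small_eq[of s v s'] by simp

lemma D0134: fixes v :: nat assumes a: "s < v" "s' < v" "x = x'" "y = y'"
  and m: "(y+s) mod v = (y'+s') mod v" shows "s = s'"
  using modeq_dvd[OF m] a small_eq[of s v s'] by simp

lemma D123: fixes v :: nat assumes "s < v" "s' < v" "x < v" "x' < v" "y = y'"
  "(x+y+s) mod v = (x'+y'+s') mod v" "(y+s) mod v = (y'+s') mod v"
  shows "s = s' \<and> x = x'"
proof -
  have 1: "int v dvd int x + int y + int s - (int x' + int y' + int s')" using modeq_dvd[OF assms(6)] by simp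
  have 2: "int v dvd int y + int s - (int y' + int s')" using modeq_dvd[OF assms(7)] by simp
  have "int v dvd int s - int s'" using 2 assms(5) by simp
  then have ss: "s = s'" using small_eq assms by blast
  have "int v dvd int x - int x'" using dvd_diff[OF 1 2] by simp
  then have "x = x'" using small_eq assms by blast
  then show ?thesis using ss by simp
qed

lemma D234: fixes v :: nat assumes "s < v" "s' < v" "x < v" "x' < v" "y < v" "y' < v"
  "(x+y+s) mod v = (x'+y'+s') mod v" "(y+s) mod v = (y'+s') mod v" "(x+s) mod v = (x'+s') mod v"
  shows "s = s' \<and> x = x' \<and> y = y'"
proof -
  have 1: "int v dvd int x + int y + int s - (int x' + int y' + int s')" using modeq_dvd[OF assms(7)] by simp
  have 2: "int v dvd int y + int s - (int y' + int s')" using modeq_dvd[OF assms(8)] by simp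
  have 3: "int v dvd int x + int s - (int x' + int s')" using modeq_dvd[OF assms(9)] by simp
  have "int v dvd (int y + int s - (int y' + int s')) + (int x + int s - (int x' + int s'))
     - (int x + int y + int s - (int x' + int y' + int s'))" using dvd_diff[OF dvd_add[OF 2 3] 1] .
  then have "int v dvd int s - int s'" by (simp add: algebra_simps)
  then have ss: "s = s'" using small_eq assms by blast
  have "int v dvd int y - int y'" using 2 ss by simp
  then have yy: "y = y'" using small_eq assms by blast
  have "int v dvd int x - int x'" using 3 ss by simp
  then have "x = x'" using small_eq assms by blast
  then show ?thesis using ss yy by simp
qed

lemma core:
  assumes "s < v" "s' < v" "x < v" "x' < v" "y < v" "y' < v"
    "i \<le> 3" "i' \<le> 3" "i \<noteq> i'"
    and ag: "\<And>j. j \<in> {i, i+1, i', i'+1} \<Longrightarrow> F v s x y j = F v s' x' y' j"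
  shows "s = s' \<and> x = x' \<and> y = y'"
proof -
  let ?S = "{i, i+1, i', i'+1}"
  have "i = 0 \<or> i = 1 \<or> i = 2 \<or> i = 3" "i' = 0 \<or> i' = 1 \<or> i' = 2 \<or> i' = 3" using assms by arith+
  then have c: "(0 \<in> ?S \<and> 1 \<in> ?S \<and> 2 \<in> ?S) \<or> (1 \<in> ?S \<and> 2 \<in> ?S \<and> 3 \<in> ?S) \<or>
     (2 \<in> ?S \<and> 3 \<in> ?S \<and> 4 \<in> ?S) \<or> (0 \<in> ?S \<and> 1 \<in> ?S \<and> 3 \<in> ?S \<and> 4 \<in> ?S)"
    using assms(9) by (elim disjE) simp_all
  from c show ?thesis
  proof (elim disjE conjE)
    assume h: "0 \<in> ?S" "1 \<in> ?S" "2 \<in> ?S"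
    have "x = x'" "y = y'" "(x+y+s) mod v = (x'+y'+s') mod v"
      using ag[OF h(1)] ag[OF h(2)] ag[OF h(3)] by (simp_all add: F_def)
    then show ?thesis using D012[OF assms(1,2)] by blast
  next
    assume h: "1 \<in> ?S" "2 \<in> ?S" "3 \<in> ?S"
    have "y = y'" "(x+y+s) mod v = (x'+y'+s') mod v" "(y+s) mod v = (y'+s') mod v"
      using ag[OF h(1)] ag[OF h(2)] ag[OF h(3)] by (simp_all add: F_def)
    then show ?thesis using D123[OF assms(1-4)] by blast
  next
    assume h: "2 \<in> ?S" "3 \<in> ?S" "4 \<in> ?S"
    have "(x+y+s) mod v = (x'+y'+s') mod v" "(y+s) mod v = (y'+s') mod v" "(x+s) mod v = (x'+s') mod v"
      using ag[OF h(1)] ag[OF h(2)] ag[OF h(3)] by (simp_all add: F_def)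
    then show ?thesis using D234[OF assms(1-6)] by blast
  next
    assume h: "0 \<in> ?S" "1 \<in> ?S" "3 \<in> ?S" "4 \<in> ?S"
    have hh: "x = x'" "y = y'" "(y+s) mod v = (y'+s') mod v"
      using ag[OF h(1)] ag[OF h(2)] ag[OF h(3)] by (simp_all add: F_def)
    show ?thesis using D0134[OF assms(1,2) hh] hh by simp
  qed
qed

lemma row_lt: assumes "x < v" "y < v" "s \<le> d" shows "row v s x y < (d+1) * v^2"
proof -
  have "x * v + y < (x+1) * v" using assms by simp
  also have "(x+1) * v \<le> v * v" using assms by (intro mult_le_mono1) simp
  finally have "x * v + y < v * v" .
  then have "row v s x y < (s+1) * (v*v)" unfolding row_def by simp
  also have "\<dots> \<le> (d+1) * (v*v)" using assms by (intro mult_le_mono1) simp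
  finally show ?thesis by (simp add: power2_eq_square)
qed

lemma ci: "cons_interaction 5 2 {..<v} T \<longleftrightarrow> (\<exists>i a b. i \<le> 3 \<and> a < v \<and> b < v \<and> T = {(i,a),(i+1,b)})"
proof
  assume "cons_interaction 5 2 {..<v} T"
  then obtain i xs where h: "i + 2 \<le> 5" "length xs = 2" "set xs \<subseteq> {..<v}" "T = {(i + j, xs ! j) | j. j < 2}"
    unfolding cons_interaction_def by blast
  have "T = {(i, xs!0), (i+1, xs!1)}" unfolding h(4) by (auto simp: less_2_cases_iff)
  moreover have "xs!0 < v" "xs!1 < v" using h(2,3) nth_mem[of 0 xs] nth_mem[of 1 xs] by force+
  ultimately show "\<exists>i a b. i \<le> 3 \<and> a < v \<and> b < v \<and> T = {(i,a),(i+1,b)}" using h(1) by force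
next
  assume "\<exists>i a b. i \<le> 3 \<and> a < v \<and> b < v \<and> T = {(i,a),(i+1,b)}"
  then obtain i a b where h: "i \<le> 3" "a < v" "b < v" "T = {(i,a),(i+1,b)}" by blast
  have "T = {(i + j, [a,b] ! j) | j. j < 2}" unfolding h(4) by (auto simp: less_2_cases_iff)
  then show "cons_interaction 5 2 {..<v} T" unfolding cons_interaction_def using h
    by (intro exI[of _ i] exI[of _ "[a,b]"]) auto
qed

lemma rho2: "rho N A {(i,a),(i+1,b)} = {r. r < N \<and> A r i = a \<and> A r (i+1) = b}"
  unfolding rho_def by auto

lemma card_rho:
  assumes "i \<le> 3" "a < v" "b < v" "d + 1 \<le> v"
  shows "d + 1 \<le> card (rho ((d+1)*v^2) (Arr v) {(i,a),(i+1,b)})"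
proof -
  have "\<forall>s. \<exists>r. s < v \<longrightarrow> (\<exists>x<v. \<exists>y<v. r = row v s x y \<and> Arr v r i = a \<and> Arr v r (i+1) = b)"
    using cover[OF assms(1-3)] by blast
  then obtain f where f: "\<And>s. s < v \<Longrightarrow> (\<exists>x<v. \<exists>y<v. f s = row v s x y \<and> Arr v (f s) i = a \<and> Arr v (f s) (i+1) = b)"
    by metis
  have sub: "f ` {..d} \<subseteq> rho ((d+1)*v^2) (Arr v) {(i,a),(i+1,b)}"
  proof
    fix r assume "r \<in> f ` {..d}"
    then obtain s where s: "s \<le> d" "r = f s" by auto
    then have "s < v" using assms by simp
    from f[OF this] obtain x y where "x < v" "y < v" "f s = row v s x y" "Arr v (f s) i = a" "Arr v (f s) (i+1) = b" by blast
    then show "r \<in> rho ((d+1)*v^2) (Arr v) {(i,a),(i+1,b)}" unfolding rho2 using s row_lt by auto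
  qed
  have inj: "inj_on f {..d}"
  proof (rule inj_onI)
    fix s s' assume "s \<in> {..d}" "s' \<in> {..d}" "f s = f s'"
    then have "s < v" "s' < v" using assms by auto
    from f[OF this(1)] f[OF this(2)] obtain x y x' y' where "x < v" "y < v" "f s = row v s x y"
      "x' < v" "y' < v" "f s' = row v s' x' y'" by blast
    then show "s = s'" using \<open>f s = f s'\<close> row_dec(1) by metis
  qed
  have fin: "finite (rho ((d+1)*v^2) (Arr v) {(i,a),(i+1,b)})" unfolding rho_def by simp
  have "card {..d} \<le> card (rho ((d+1)*v^2) (Arr v) {(i,a),(i+1,b)})"
    by (rule card_inj_on_le[OF inj sub fin])
  then show ?thesis by simp
qed

lemma inter1:
  assumes "d + 1 \<le> v" "cons_interaction 5 2 {..<v} T" "cons_interaction 5 2 {..<v} T'" "T \<noteq> T'"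
  shows "card (rho ((d+1)*v^2) (Arr v) T \<inter> rho ((d+1)*v^2) (Arr v) T') \<le> 1"
proof -
  from assms(2)[unfolded ci] obtain i a b where t: "i \<le> 3" "a < v" "b < v" "T = {(i,a),(i+1,b)}" by blast
  from assms(3)[unfolded ci] obtain i' a' b' where t': "i' \<le> 3" "a' < v" "b' < v" "T' = {(i',a'),(i'+1,b')}" by blast
  have v: "v > 0" using assms by simp
  have all: "\<forall>r\<in>rho ((d+1)*v^2) (Arr v) T \<inter> rho ((d+1)*v^2) (Arr v) T'. \<forall>r'\<in>rho ((d+1)*v^2) (Arr v) T \<inter> rho ((d+1)*v^2) (Arr v) T'. r = r'"
  proof (intro ballI)
    fix r r' assume rr: "r \<in> rho ((d+1)*v^2) (Arr v) T \<inter> rho ((d+1)*v^2) (Arr v) T'"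
      "r' \<in> rho ((d+1)*v^2) (Arr v) T \<inter> rho ((d+1)*v^2) (Arr v) T'"
    then have R: "r < (d+1)*(v*v)" "Arr v r i = a" "Arr v r (i+1) = b" "Arr v r i' = a'" "Arr v r (i'+1) = b'"
      "r' < (d+1)*(v*v)" "Arr v r' i = a" "Arr v r' (i+1) = b" "Arr v r' i' = a'" "Arr v r' (i'+1) = b'"
      using rr unfolding t(4) t'(4) rho2 by (simp_all add: power2_eq_square)
    have ii: "i \<noteq> i'"
    proof
      assume "i = i'"
      then have "a = a'" "b = b'" using R by auto
      then show False using assms(4) t(4) t'(4) \<open>i = i'\<close> by simp
    qed
    have "r div (v*v) < d+1" using R(1) by (rule less_mult_imp_div_less)
    moreover have "r' div (v*v) < d+1" using R(6) by (rule less_mult_imp_div_less)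
    ultimately have sv: "r div (v*v) < v" "r' div (v*v) < v" using assms(1) by linarith+
    have ag: "F v (r div (v*v)) (r div v mod v) (r mod v) j = F v (r' div (v*v)) (r' div v mod v) (r' mod v) j"
      if "j \<in> {i, i+1, i', i'+1}" for j
    proof -
      have "Arr v r j = Arr v r' j" using that R by auto
      then show ?thesis by (simp only: Arr_F)
    qed
    have m: "r div v mod v < v" "r' div v mod v < v" "r mod v < v" "r' mod v < v" using v by simp_all
    have eq: "r div (v*v) = r' div (v*v) \<and> r div v mod v = r' div v mod v \<and> r mod v = r' mod v"
      by (rule core[OF sv(1) sv(2) m(1) m(2) m(3) m(4) t(1) t'(1) ii ag])
    have "r = row v (r div (v*v)) (r div v mod v) (r mod v)" by (rule row_enc[OF v])
    also have "\<dots> = row v (r' div (v*v)) (r' div v mod v) (r' mod v)" using eq by simp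
    also have "\<dots> = r'" by (rule row_enc[OF v, symmetric])
    finally show "r = r'" .
  qed
  have fin: "finite (rho ((d+1)*v^2) (Arr v) T \<inter> rho ((d+1)*v^2) (Arr v) T')" unfolding rho_def by simp
  show ?thesis using card_le_Suc0_iff_eq[OF fin] all by (simp only: One_nat_def)
qed

theorem mainTheorem19:
  fixes v d :: nat
  assumes "v \<ge> 2" and "d > 0" and "d + 1 \<le> v"
    and "(d, v) \<notin> {(2, 6), (4, 6)}"
    and "\<not> (\<exists>u. v = 6 * u \<and> d = v - 2 \<and> u \<noteq> 1 \<and> coprime u 6)"
  shows "\<exists>A :: nat \<Rightarrow> nat \<Rightarrow> nat. is_CDA d 2 ((d + 1) * v ^ 2) 5 {..<v} A"
proof (intro exI[of _ "Arr v"])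
  have v: "v > 0" using assms by simp
  let ?N = "(d + 1) * v ^ 2"
  have arr: "is_array ?N 5 {..<v} (Arr v)"
    unfolding is_array_def Arr_def Let_def using v by auto
  have cov: "\<forall>i xs. i + 2 \<le> 5 \<longrightarrow> length xs = 2 \<longrightarrow> set xs \<subseteq> {..<v} \<longrightarrow>
        (\<exists>r<?N. \<forall>j<2. Arr v r (i + j) = xs ! j)"
  proof (intro allI impI)
    fix i xs assume h: "i + 2 \<le> (5::nat)" "length xs = 2" "set xs \<subseteq> {..<v}"
    have ab: "xs!0 < v" "xs!1 < v" using h(2,3) nth_mem[of 0 xs] nth_mem[of 1 xs] by force+
    obtain x y where xy: "x < v" "y < v" "Arr v (row v 0 x y) i = xs!0" "Arr v (row v 0 x y) (i+1) = xs!1"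
      using cover[of i "xs!0" v "xs!1" 0] h(1) ab v by auto
    have "row v 0 x y < ?N" using row_lt[OF xy(1,2), of 0 d] by simp
    moreover have "\<forall>j<2. Arr v (row v 0 x y) (i + j) = xs ! j"
      using xy by (auto simp: less_2_cases_iff)
    ultimately show "\<exists>r<?N. \<forall>j<2. Arr v r (i + j) = xs ! j" by blast
  qed
  have det: "\<forall>TT T. (\<forall>S\<in>TT. cons_interaction 5 2 {..<v} S) \<and> finite TT \<and> card TT = d \<and>
             cons_interaction 5 2 {..<v} T \<longrightarrow>
             (rho ?N (Arr v) T \<subseteq> rho_set ?N (Arr v) TT \<longleftrightarrow> T \<in> TT)"
  proof (intro allI impI)
    fix TT T assume h: "(\<forall>S\<in>TT. cons_interaction 5 2 {..<v} S) \<and> finite TT \<and> card TT = d \<and>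
             cons_interaction 5 2 {..<v} T"
    show "rho ?N (Arr v) T \<subseteq> rho_set ?N (Arr v) TT \<longleftrightarrow> T \<in> TT"
    proof
      assume sub: "rho ?N (Arr v) T \<subseteq> rho_set ?N (Arr v) TT"
      show "T \<in> TT"
      proof (rule ccontr)
        assume nT: "T \<notin> TT"
        have "rho ?N (Arr v) T = (\<Union>S\<in>TT. rho ?N (Arr v) T \<inter> rho ?N (Arr v) S)"
          using sub unfolding rho_set_def by blast
        then have "card (rho ?N (Arr v) T) \<le> (\<Sum>S\<in>TT. card (rho ?N (Arr v) T \<inter> rho ?N (Arr v) S))"
          using card_UN_le[of TT "\<lambda>S. rho ?N (Arr v) T \<inter> rho ?N (Arr v) S"] h by simp
        also have "\<dots> \<le> (\<Sum>S\<in>TT. 1)"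
          by (rule sum_mono, rule inter1[OF assms(3)]) (use h nT in auto)
        also have "\<dots> = d" using h by simp
        finally have "card (rho ?N (Arr v) T) \<le> d" .
        moreover obtain i a b where t: "i \<le> 3" "a < v" "b < v" "T = {(i,a),(i+1,b)}" using h[unfolded ci] by blast
        ultimately show False using card_rho[OF t(1-3) assms(3)] by simp
      qed
    next
      assume "T \<in> TT"
      then show "rho ?N (Arr v) T \<subseteq> rho_set ?N (Arr v) TT" unfolding rho_set_def by blast
    qed
  qed
  show "is_CDA d 2 ?N 5 {..<v} (Arr v)" unfolding is_CDA_def using arr cov det by blast
qed

end
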